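(* Let $r\ge1$ and $n\ge 1$ be integers, and let $I_1\subseteq\mathbb{F}_3^r$ be the set of all vectors whose entries lie in $\{0,1\}$ and which have exactly $k$ entries equal to $1$ for some $k\in[n,2n-1]$. Then for any pairwise distinct $A,B,C\in I_1$ and any $\alpha,\beta,\gamma\in\{1,2\}$, \[\alpha A\oplus\beta B\oplus\gamma C\neq 0.\]
   Context: Vectors in $\mathbb{F}_3^r$ are identified with $r$-trit ternary strings; $\oplus$ is componentwise addition modulo $3$ and $\alpha A$ is componentwise scalar multiplication modulo $3$. *)

theory Defs
  imports Main
begin

text \<open>Vectors of F_3^r are represented as functions nat => int, with entries
  (representatives in {0,1,2}) at coordinates i < r and value 0 outside.\<close>

definition I1 :: "nat \<Rightarrow> nat \<Rightarrow> (nat \<Rightarrow> int) set" where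
  "I1 r n = {A. (\<forall>i<r. A i \<in> {0,1}) \<and> (\<forall>i\<ge>r. A i = 0) \<and>
               card {i. i < r \<and> A i = 1} \<in> {n..2*n-1}}"

definition lin3_zero :: "nat \<Rightarrow> int \<Rightarrow> (nat \<Rightarrow> int) \<Rightarrow> int \<Rightarrow> (nat \<Rightarrow> int) \<Rightarrow> int \<Rightarrow> (nat \<Rightarrow> int) \<Rightarrow> bool" where
  "lin3_zero r \<alpha> A \<beta> B \<gamma> C \<longleftrightarrow> (\<forall>i<r. (\<alpha> * A i + \<beta> * B i + \<gamma> * C i) mod 3 = 0)"

end

theory Submission
  imports Defs
begin

lemma card_split:
  fixes A B C :: "nat \<Rightarrow> int"
  assumes "\<forall>i<r. A i \<in> {0,1} \<and> B i \<in> {0,1} \<and> C i \<in> {0,1} \<and> C i = A i + B i"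
  shows "card {i. i<r \<and> C i = 1} = card {i. i<r \<and> A i = 1} + card {i. i<r \<and> B i = 1}"
proof -
  have e: "{i. i<r \<and> C i = 1} = {i. i<r \<and> A i = 1} \<union> {i. i<r \<and> B i = 1}"
    using assms by auto
  have d: "{i. i<r \<and> A i = 1} \<inter> {i. i<r \<and> B i = 1} = {}"
    using assms by fastforce
  show ?thesis unfolding e by (rule card_Un_disjoint) (use d in auto)
qed

lemma sum_contra:
  fixes A B C :: "nat \<Rightarrow> int"
  assumes "A \<in> I1 r n" "B \<in> I1 r n" "C \<in> I1 r n" "n \<ge> 1"
    and "\<forall>i<r. C i = A i + B i"
  shows False
proof -
  have "card {i. i<r \<and> C i = 1} = card {i. i<r \<and> A i = 1} + card {i. i<r \<and> B i = 1}"
    using assms(1-3,5) unfolding I1_def by (intro card_split) auto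
  thus False using assms(1-4) unfolding I1_def by auto
qed

lemma coord:
  fixes a b c x y z :: int
  assumes "a \<in> {0,1}" "b \<in> {0,1}" "c \<in> {0,1}" "x \<in> {1,2}" "y \<in> {1,2}" "z \<in> {1,2}"
    and "(x*a + y*b + z*c) mod 3 = 0"
  shows "(x = y \<and> y = z \<longrightarrow> a = b) \<and> (x = y \<and> y \<noteq> z \<longrightarrow> c = a + b)
       \<and> (x = z \<and> y \<noteq> z \<longrightarrow> b = a + c) \<and> (y = z \<and> x \<noteq> z \<longrightarrow> a = b + c)"
  using assms by auto

theorem theorem4p2:
  fixes r n :: nat and A B C :: "nat \<Rightarrow> int" and \<alpha> \<beta> \<gamma> :: int
  assumes "r \<ge> 1" and "n \<ge> 1"
    and "A \<in> I1 r n" and "B \<in> I1 r n" and "C \<in> I1 r n"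
    and "A \<noteq> B" and "B \<noteq> C" and "A \<noteq> C"
    and "\<alpha> \<in> {1,2}" and "\<beta> \<in> {1,2}" and "\<gamma> \<in> {1,2}"
  shows "\<not> lin3_zero r \<alpha> A \<beta> B \<gamma> C"
proof
  assume z: "lin3_zero r \<alpha> A \<beta> B \<gamma> C"
  have P: "\<And>i. i < r \<Longrightarrow> (\<alpha> = \<beta> \<and> \<beta> = \<gamma> \<longrightarrow> A i = B i) \<and> (\<alpha> = \<beta> \<and> \<beta> \<noteq> \<gamma> \<longrightarrow> C i = A i + B i)
       \<and> (\<alpha> = \<gamma> \<and> \<beta> \<noteq> \<gamma> \<longrightarrow> B i = A i + C i) \<and> (\<beta> = \<gamma> \<and> \<alpha> \<noteq> \<gamma> \<longrightarrow> A i = B i + C i)"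
    by (rule coord) (use z assms(3-5,9-11) in \<open>auto simp: lin3_zero_def I1_def\<close>)
  have out: "\<And>i. i \<ge> r \<Longrightarrow> A i = 0 \<and> B i = 0" using assms(3,4) by (auto simp: I1_def)
  consider "\<alpha> = \<beta> \<and> \<beta> = \<gamma>" | "\<alpha> = \<beta> \<and> \<beta> \<noteq> \<gamma>" | "\<alpha> = \<gamma> \<and> \<beta> \<noteq> \<gamma>" | "\<beta> = \<gamma> \<and> \<alpha> \<noteq> \<gamma>"
    using assms(9-11) by auto
  then show False
  proof cases
    case 1
    have "A = B"
    proof
      fix i show "A i = B i" using P[of i] out[of i] 1 by (cases "i < r") auto
    qed
    with assms(6) show False ..
  next
    case 2 then show False using sum_contra[OF assms(3,4,5,2)] P by blast
  next
    case 3 then show False using sum_contra[OF assms(3,5,4,2)] P by blast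
  next
    case 4 then show False using sum_contra[OF assms(4,5,3,2)] P by blast
  qed
qed

end
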